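(* Let $\mathcal{M}$ be an RKHS of functions of $(a,w,x)$ with kernel $K_{\mathcal{M}}$ and $\mathcal{G}$ an RKHS of functions of $(a,z,x)$ with kernel $K_{\mathcal{G}}$, each with its canonical RKHS norm, and let $\lambda_m,\gamma_m,\lambda_g,\gamma_g>0$. Given data $\{(a_i,z_i,w_i,x_i,y_i)\}_{i=1}^n$, define $\Phi^n_q(q,m;p)=\frac1n\sum_i\big(q(a_i,z_i,x_i)-\frac1{p(a_i\mid w_i,x_i)}\big)m(a_i,w_i,x_i)$ and $\Phi^n_h(h,g)=\frac1n\sum_i(y_i-h(a_i,w_i,x_i))g(a_i,z_i,x_i)$, and let $K_{\mathcal{M},n}=(K_{\mathcal{M}}((a_i,w_i,x_i),(a_j,w_j,x_j)))_{i,j=1}^n$, $K_{\mathcal{G},n}=(K_{\mathcal{G}}((a_i,z_i,x_i),(a_j,z_j,x_j)))_{i,j=1}^n$, $\psi_{q,n}=\big(\frac1n(q(a_i,z_i,x_i)-\frac1{p(a_i\mid w_i,x_i)})\big)_{i=1}^n$, $\psi_{h,n}=\big(\frac1n(y_i-h(a_i,w_i,x_i))\big)_{i=1}^n$. Then for any $q,h$, $$\max_{m\in\mathcal{M}}\Phi^n_q-\lambda_m\|m\|_{2,n}^2-\gamma_m\|m\|_{\mathcal{M}}^2=\frac1{4\gamma_m}\psi_{q,n}^\top K_{\mathcal{M},n}\Big(\frac{\lambda_m}{\gamma_m}\frac1nK_{\mathcal{M},n}+I\Big)^{-1}\psi_{q,n}=\frac1{4\gamma_m}\psi_{q,n}^\top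 K_{\mathcal{M},n}^{1/2}\Big(\frac{\lambda_m}{\gamma_m}\frac1nK_{\mathcal{M},n}+I\Big)^{-1}K_{\mathcal{M},n}^{1/2}\psi_{q,n},$$ $$\max_{g\in\mathcal{G}}\Phi^n_h-\lambda_g\|g\|_{2,n}^2-\gamma_g\|g\|_{\mathcal{G}}^2=\frac1{4\gamma_g}\psi_{h,n}^\top K_{\mathcal{G},n}\Big(\frac{\lambda_g}{\gamma_g}\frac1nK_{\mathcal{G},n}+I\Big)^{-1}\psi_{h,n}=\frac1{4\gamma_g}\psi_{h,n}^\top K_{\mathcal{G},n}^{1/2}\Big(\frac{\lambda_g}{\gamma_g}\frac1nK_{\mathcal{G},n}+I\Big)^{-1}K_{\mathcal{G},n}^{1/2}\psi_{h,n}.$$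
   Context: $\|m\|_{2,n}^2=\frac1n\sum_i m^2(a_i,w_i,x_i)$ and $\|g\|_{2,n}^2=\frac1n\sum_i g^2(a_i,z_i,x_i)$; $p(a\mid w,x)$ is a (given) conditional density of $A$ given $(W,X)$; $I$ is the $n\times n$ identity matrix. *)

theory Defs
  imports "HOL-Analysis.Analysis"
begin

text \<open>The Hilbert space is a type 'h (real inner product space, complete); ev identifies its
  elements with functions 'x \<Rightarrow> real (injectively). The canonical RKHS norm is norm on 'h.\<close>
definition rkhs :: "('h::{real_inner,complete_space} \<Rightarrow> 'x \<Rightarrow> real) \<Rightarrow> ('x \<Rightarrow> 'x \<Rightarrow> real) \<Rightarrow> bool" where
  "rkhs ev K \<longleftrightarrow> inj ev \<and>
     (\<forall>y. \<exists>k. ev k = (\<lambda>x. K x y) \<and> (\<forall>f. ev f y = inner f k))"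

definition is_max_value :: "('h \<Rightarrow> real) \<Rightarrow> real \<Rightarrow> bool" where
  "is_max_value F V \<longleftrightarrow> (\<exists>f. F f = V) \<and> (\<forall>f. F f \<le> V)"

definition psd_matrix :: "real^'n^'n \<Rightarrow> bool" where
  "psd_matrix S \<longleftrightarrow> transpose S = S \<and> (\<forall>v. 0 \<le> v \<bullet> (S *v v))"

definition matrix_sqrt :: "real^'n^'n \<Rightarrow> real^'n^'n" where
  "matrix_sqrt K = (THE S. psd_matrix S \<and> S ** S = K)"

end

theory Submission
  imports Defs
begin


lemma sym_dot:
  fixes A :: "real^'n^'n"
  assumes "transpose A = A"
  shows "x \<bullet> (A *v y) = (A *v x) \<bullet> y"
proof -
  have "x \<bullet> (A *v y) = (x v* A) \<bullet> y" by (simp add: dot_lmul_matrix)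
  also have "x v* A = transpose A *v x" by simp
  finally show ?thesis using assms by simp
qed

lemma small_pos_zero:
  fixes a C :: real
  assumes "\<And>t. t > 0 \<Longrightarrow> a \<le> t * C" and "a \<ge> 0"
  shows "a = 0"
proof (rule ccontr)
  assume "a \<noteq> 0"
  hence ap: "a > 0" using assms(2) by simp
  define t where "t = a / (2 * (\<bar>C\<bar> + 1))"
  have tp: "t > 0" unfolding t_def using ap by (simp add: add_pos_nonneg)
  have "t * C \<le> t * \<bar>C\<bar>" using tp by (simp add: mult_left_mono)
  also have "t * \<bar>C\<bar> < a"
  proof -
    have "t * \<bar>C\<bar> = a * (\<bar>C\<bar> / (2 * (\<bar>C\<bar> + 1)))" unfolding t_def by simp
    also have "\<bar>C\<bar> / (2 * (\<bar>C\<bar> + 1)) < 1" by (simp add: divide_simps)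
    hence "a * (\<bar>C\<bar> / (2 * (\<bar>C\<bar> + 1))) < a * 1" using ap by (intro mult_strict_left_mono) auto
    finally show ?thesis by simp
  qed
  finally show False using assms(1)[OF tp] by simp
qed

lemma eig_exists:
  fixes A :: "real^'n^'n"
  assumes sym: "transpose A = A" and sU: "subspace U" and inv: "\<forall>x\<in>U. A *v x \<in> U"
    and ne: "U \<noteq> {0}"
  shows "\<exists>u\<in>U. norm u = 1 \<and> (\<exists>\<mu>. A *v u = \<mu> *\<^sub>R u)"
proof -
  define S where "S = U \<inter> sphere 0 1"
  have cS: "compact S" unfolding S_def
    using closed_subspace[OF sU] by (simp add: closed_Int_compact)
  obtain x where x: "x \<in> U" "x \<noteq> 0" using ne sU subspace_0 by blast
  have "(1 / norm x) *\<^sub>R x \<in> S" unfolding S_def using x sU by (simp add: subspace_scale)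
  hence neS: "S \<noteq> {}" by blast
  have cont: "continuous_on S (\<lambda>v. v \<bullet> (A *v v))"
    by (intro continuous_intros matrix_vector_mult_linear_continuous_on)
  obtain u where uS: "u \<in> S" and umax: "\<forall>y\<in>S. y \<bullet> (A *v y) \<le> u \<bullet> (A *v u)"
    using continuous_attains_sup[OF cS neS cont] by blast
  define \<mu> where "\<mu> = u \<bullet> (A *v u)"
  have uU: "u \<in> U" and nu: "norm u = 1" using uS unfolding S_def by auto
  have uu: "u \<bullet> u = 1" using nu by (simp add: dot_square_norm)
  have bound: "v \<bullet> (A *v v) \<le> \<mu> * (v \<bullet> v)" if vU: "v \<in> U" for v
  proof (cases "v = 0")
    case True then show ?thesis by simp
  next
    case False
    define v' where "v' = (1 / norm v) *\<^sub>R v"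
    have "v' \<in> S" unfolding S_def v'_def using vU sU False by (simp add: subspace_scale)
    hence "v' \<bullet> (A *v v') \<le> \<mu>" using umax unfolding \<mu>_def by blast
    hence "(1 / norm v)^2 * (v \<bullet> (A *v v)) \<le> \<mu>"
      unfolding v'_def by (simp add: matrix_vector_mult_scaleR power2_eq_square)
    hence "(v \<bullet> (A *v v)) \<le> \<mu> * (norm v)^2" using False
      by (simp add: field_simps)
    thus ?thesis by (simp add: dot_square_norm)
  qed
  define w where "w = A *v u - \<mu> *\<^sub>R u"
  have wU: "w \<in> U" unfolding w_def using inv uU sU by (simp add: subspace_diff subspace_scale)
  have uw: "u \<bullet> w = 0" unfolding w_def \<mu>_def using uu by (simp add: inner_diff_right)
  have wAu: "w \<bullet> (A *v u) = w \<bullet> w"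
  proof -
    have "A *v u = w + \<mu> *\<^sub>R u" unfolding w_def by simp
    hence "w \<bullet> (A *v u) = w \<bullet> w + \<mu> * (w \<bullet> u)" by (simp add: inner_add_right)
    thus ?thesis using uw by (simp add: inner_commute)
  qed
  have uAw: "u \<bullet> (A *v w) = w \<bullet> w" using sym_dot[OF sym, of u w] wAu by (simp add: inner_commute)
  have key: "w \<bullet> w \<le> t * (\<mu> * (w \<bullet> w) - w \<bullet> (A *v w))" if tp: "t > 0" for t
  proof -
    have "u + t *\<^sub>R w \<in> U" using uU wU sU by (simp add: subspace_add subspace_scale)
    from bound[OF this]
    have "u \<bullet> (A *v u) + t * (u \<bullet> (A *v w)) + t * (w \<bullet> (A *v u)) + t * t * (w \<bullet> (A *v w))
          \<le> \<mu> * (u \<bullet> u + 2 * t * (u \<bullet> w) + t * t * (w \<bullet> w))"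
      by (simp add: matrix_vector_right_distrib matrix_vector_mult_scaleR inner_add_left
          inner_add_right algebra_simps inner_commute[of w u])
    hence "\<mu> + 2 * t * (w \<bullet> w) + t * t * (w \<bullet> (A *v w)) \<le> \<mu> + \<mu> * (t * t * (w \<bullet> w))"
      using uAw wAu uu uw unfolding \<mu>_def[symmetric] by (simp add: algebra_simps)
    hence "t * (2 * (w \<bullet> w)) \<le> t * (t * (\<mu> * (w \<bullet> w) - w \<bullet> (A *v w)))"
      by (simp add: algebra_simps)
    hence "2 * (w \<bullet> w) \<le> t * (\<mu> * (w \<bullet> w) - w \<bullet> (A *v w))" using tp by simp
    thus ?thesis by (smt (verit) inner_ge_zero)
  qed
  have "w \<bullet> w = 0" using small_pos_zero[of "w \<bullet> w"] key inner_ge_zero by blast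
  hence "w = 0" by simp
  hence "A *v u = \<mu> *\<^sub>R u" unfolding w_def by simp
  thus ?thesis using uU nu by blast
qed

lemma spectral_sub:
  fixes A :: "real^'n^'n"
  assumes sym: "transpose A = A"
  shows "subspace U \<Longrightarrow> (\<forall>x\<in>U. A *v x \<in> U) \<Longrightarrow>
    \<exists>B. B \<subseteq> U \<and> finite B \<and> span B = U \<and> pairwise orthogonal B \<and>
        (\<forall>b\<in>B. norm b = 1 \<and> (\<exists>\<mu>. A *v b = \<mu> *\<^sub>R b))"
proof (induction "dim U" arbitrary: U rule: less_induct)
  case less
  show ?case
  proof (cases "U = {0}")
    case True
    then show ?thesis by (intro exI[of _ "{}"]) auto
  next
    case False
    obtain u \<mu> where uU: "u \<in> U" and nu: "norm u = 1" and eu: "A *v u = \<mu> *\<^sub>R u"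
      using eig_exists[OF sym less.prems False] by blast
    define U' where "U' = U \<inter> {v. orthogonal u v}"
    have sU': "subspace U'" unfolding U'_def
      using subspace_inter[OF less.prems(1) subspace_orthogonal_to_vector[of u]] by simp
    have inv': "\<forall>x\<in>U'. A *v x \<in> U'"
    proof
      fix x assume x: "x \<in> U'"
      have "u \<bullet> (A *v x) = (A *v u) \<bullet> x" by (rule sym_dot[OF sym])
      also have "\<dots> = 0" using x eu unfolding U'_def orthogonal_def by simp
      finally show "A *v x \<in> U'" using x less.prems(2) unfolding U'_def orthogonal_def by auto
    qed
    have uu: "u \<bullet> u = 1" using nu by (simp add: dot_square_norm)
    have "U' \<subset> U" unfolding U'_def using uU uu by (auto simp: orthogonal_def)
      (metis IntD2 mem_Collect_eq orthogonal_def zero_neq_one)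
    hence "span U' \<subset> span U" using sU' less.prems(1) by (metis span_eq_iff)
    hence "dim U' < dim U" by (rule dim_psubset)
    from less.hyps[OF this sU' inv'] obtain B' where B': "B' \<subseteq> U'" "finite B'" "span B' = U'"
      "pairwise orthogonal B'" "\<forall>b\<in>B'. norm b = 1 \<and> (\<exists>\<mu>. A *v b = \<mu> *\<^sub>R b)" by blast
    have uB': "u \<notin> B'" using B'(1) uu unfolding U'_def orthogonal_def by auto
    have ortho: "\<forall>b\<in>B'. orthogonal u b" using B'(1) unfolding U'_def by auto
    show ?thesis
    proof (intro exI[of _ "insert u B'"] conjI)
      show "insert u B' \<subseteq> U" using uU B'(1) unfolding U'_def by auto
      show "finite (insert u B')" using B'(2) by simp
      show "span (insert u B') = U"
      proof
        show "span (insert u B') \<subseteq> U" using uU B'(1) less.prems(1) unfolding U'_def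
          by (intro span_minimal) auto
        show "U \<subseteq> span (insert u B')"
        proof
          fix v assume v: "v \<in> U"
          have "v - (u \<bullet> v) *\<^sub>R u \<in> U'" unfolding U'_def orthogonal_def
            using v uU less.prems(1) uu by (auto simp: subspace_diff subspace_scale inner_diff_right)
          thus "v \<in> span (insert u B')" unfolding span_breakdown_eq B'(3) by blast
        qed
      qed
      show "pairwise orthogonal (insert u B')" using B'(4) ortho uB'
        by (auto simp: pairwise_insert orthogonal_commute)
      show "\<forall>b\<in>insert u B'. norm b = 1 \<and> (\<exists>\<mu>. A *v b = \<mu> *\<^sub>R b)" using B'(5) nu eu by auto
    qed
  qed
qed

lemma onb_pick:
  fixes B :: "(real^'n) set"
  assumes "finite B" "pairwise orthogonal B" "\<forall>b\<in>B. norm b = 1" "b0 \<in> B"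
  shows "(\<Sum>b\<in>B. f b * (b0 \<bullet> b)) = f b0"
proof -
  have "(\<Sum>b\<in>B. f b * (b0 \<bullet> b)) = f b0 * (b0 \<bullet> b0) + (\<Sum>b\<in>B - {b0}. f b * (b0 \<bullet> b))"
    using sum.remove[OF assms(1,4), of "\<lambda>b. f b * (b0 \<bullet> b)"] by simp
  also have "(\<Sum>b\<in>B - {b0}. f b * (b0 \<bullet> b)) = 0"
    using assms(2,4) by (intro sum.neutral) (auto simp: pairwise_def orthogonal_def)
  also have "b0 \<bullet> b0 = 1" using assms(3,4) by (simp add: dot_square_norm)
  finally show ?thesis by simp
qed

lemma onb_expand:
  fixes B :: "(real^'n) set"
  assumes fB: "finite B" and oB: "pairwise orthogonal B" and nB: "\<forall>b\<in>B. norm b = 1"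
    and sB: "span B = UNIV"
  shows "v = (\<Sum>b\<in>B. (b \<bullet> v) *\<^sub>R b)"
proof -
  define w where "w = v - (\<Sum>b\<in>B. (b \<bullet> v) *\<^sub>R b)"
  have "orthogonal w b0" if b0: "b0 \<in> B" for b0
  proof -
    have "b0 \<bullet> w = b0 \<bullet> v - (\<Sum>b\<in>B. (b \<bullet> v) * (b0 \<bullet> b))"
      unfolding w_def by (simp add: inner_diff_right inner_sum_right)
    also have "(\<Sum>b\<in>B. (b \<bullet> v) * (b0 \<bullet> b)) = b0 \<bullet> v"
      by (rule onb_pick[OF fB oB nB b0])
    finally show ?thesis by (simp add: orthogonal_def inner_commute)
  qed
  hence "orthogonal w w" by (intro orthogonal_to_span[of w B w]) (simp_all add: sB)
  hence "w = 0" by (simp add: orthogonal_self)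
  thus ?thesis unfolding w_def by simp
qed

lemma spectral:
  fixes A :: "real^'n^'n"
  assumes sym: "transpose A = A"
  obtains B where "finite B" "span B = UNIV" "pairwise orthogonal B"
        "\<forall>b\<in>B. norm b = 1 \<and> (\<exists>\<mu>. A *v b = \<mu> *\<^sub>R b)"
  using spectral_sub[OF sym, of UNIV] by auto

lemma psd_zero:
  fixes S :: "real^'n^'n"
  assumes "psd_matrix S" and "v \<bullet> (S *v v) = 0"
  shows "S *v v = 0"
proof -
  have sym: "transpose S = S" and ps: "\<forall>x. 0 \<le> x \<bullet> (S *v x)" using assms(1) unfolding psd_matrix_def by auto
  define w where "w = S *v v"
  have vw: "v \<bullet> (S *v w) = w \<bullet> w" using sym_dot[OF sym, of v w] unfolding w_def by simp
  have wv: "w \<bullet> (S *v v) = w \<bullet> w" unfolding w_def by simp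
  have key: "w \<bullet> w \<le> t * (w \<bullet> (S *v w))" if tp: "t > 0" for t
  proof -
    have "0 \<le> (v - t *\<^sub>R w) \<bullet> (S *v (v - t *\<^sub>R w))" using ps by blast
    also have "\<dots> = v \<bullet> (S *v v) - t * (v \<bullet> (S *v w)) - t * (w \<bullet> (S *v v)) + t * t * (w \<bullet> (S *v w))"
      by (simp add: matrix_vector_mult_diff_distrib matrix_vector_mult_scaleR inner_diff_left
          inner_diff_right algebra_simps)
    finally have "t * (2 * (w \<bullet> w)) \<le> t * (t * (w \<bullet> (S *v w)))"
      using vw wv assms(2) by (simp add: algebra_simps)
    hence "2 * (w \<bullet> w) \<le> t * (w \<bullet> (S *v w))" using tp by simp
    thus ?thesis by (smt (verit) inner_ge_zero)
  qed
  have "w \<bullet> w = 0" using small_pos_zero[of "w \<bullet> w"] key inner_ge_zero by blast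
  thus ?thesis unfolding w_def by simp
qed

lemma psd_sqrt_exists:
  fixes K :: "real^'n^'n"
  assumes psd: "psd_matrix K"
  shows "\<exists>S. psd_matrix S \<and> S ** S = K"
proof -
  have sym: "transpose K = K" and ps: "\<forall>x. 0 \<le> x \<bullet> (K *v x)" using psd unfolding psd_matrix_def by auto
  obtain B where fB: "finite B" and sB: "span B = UNIV" and oB: "pairwise orthogonal B"
    and eB: "\<forall>b\<in>B. norm b = 1 \<and> (\<exists>\<mu>. K *v b = \<mu> *\<^sub>R b)" using spectral[OF sym] by blast
  have nB: "\<forall>b\<in>B. norm b = 1" using eB by blast
  define mu where "mu b = b \<bullet> (K *v b)" for b
  have Kb: "K *v b = mu b *\<^sub>R b" if b: "b \<in> B" for b
  proof -
    obtain m where m: "K *v b = m *\<^sub>R b" using eB b by blast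
    have "b \<bullet> b = 1" using nB b by (simp add: dot_square_norm)
    hence "mu b = m" unfolding mu_def m by simp
    thus ?thesis using m by simp
  qed
  have mu0: "mu b \<ge> 0" for b unfolding mu_def using ps by blast
  define S :: "real^'n^'n" where "S = (\<chi> i j. \<Sum>b\<in>B. sqrt (mu b) * b$i * b$j)"
  have Sv: "S *v v = (\<Sum>b\<in>B. (sqrt (mu b) * (b \<bullet> v)) *\<^sub>R b)" for v
  proof -
    have "(S *v v) $ i = (\<Sum>b\<in>B. (sqrt (mu b) * (b \<bullet> v)) *\<^sub>R b) $ i" for i
    proof -
      have "(S *v v) $ i = (\<Sum>j\<in>UNIV. (\<Sum>b\<in>B. sqrt (mu b) * b$i * b$j) * v$j)"
        unfolding S_def matrix_vector_mult_def by simp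
      also have "\<dots> = (\<Sum>b\<in>B. sqrt (mu b) * b$i * (\<Sum>j\<in>UNIV. b$j * v$j))"
      proof -
        have "(\<Sum>j\<in>UNIV. (\<Sum>b\<in>B. sqrt (mu b) * b$i * b$j) * v$j)
            = (\<Sum>j\<in>UNIV. \<Sum>b\<in>B. sqrt (mu b) * b$i * (b$j * v$j))"
          by (simp add: sum_distrib_right mult.assoc)
        also have "\<dots> = (\<Sum>b\<in>B. \<Sum>j\<in>UNIV. sqrt (mu b) * b$i * (b$j * v$j))"
          by (rule sum.swap)
        also have "\<dots> = (\<Sum>b\<in>B. sqrt (mu b) * b$i * (\<Sum>j\<in>UNIV. b$j * v$j))"
          by (simp add: sum_distrib_left)
        finally show ?thesis .
      qed
      also have "\<dots> = (\<Sum>b\<in>B. (sqrt (mu b) * (b \<bullet> v)) *\<^sub>R b) $ i"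
        by (simp add: inner_vec_def sum_component mult_ac)
      finally show ?thesis .
    qed
    thus ?thesis by (simp add: vec_eq_iff)
  qed
  have bSv: "b0 \<bullet> (S *v v) = sqrt (mu b0) * (b0 \<bullet> v)" if b0: "b0 \<in> B" for b0 v
    unfolding Sv using onb_pick[OF fB oB nB b0, of "\<lambda>b. sqrt (mu b) * (b \<bullet> v)"]
    by (simp add: inner_sum_right)
  have symS: "transpose S = S" unfolding S_def transpose_def by (simp add: vec_eq_iff mult_ac)
  have psS: "0 \<le> v \<bullet> (S *v v)" for v
  proof -
    have "v \<bullet> (S *v v) = (\<Sum>b\<in>B. sqrt (mu b) * (b \<bullet> v) * (v \<bullet> b))"
      unfolding Sv by (simp add: inner_sum_right)
    also have "\<dots> = (\<Sum>b\<in>B. sqrt (mu b) * (b \<bullet> v)^2)"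
      by (simp add: inner_commute[of v] power2_eq_square mult.assoc)
    also have "\<dots> \<ge> 0" using mu0 by (intro sum_nonneg) simp
    finally show ?thesis .
  qed
  have "(S ** S) *v v = K *v v" for v
  proof -
    have "(S ** S) *v v = (\<Sum>b\<in>B. (sqrt (mu b) * (sqrt (mu b) * (b \<bullet> v))) *\<^sub>R b)"
      unfolding matrix_vector_mul_assoc[symmetric] Sv[of "S *v v"] using bSv by simp
    also have "\<dots> = (\<Sum>b\<in>B. (mu b * (b \<bullet> v)) *\<^sub>R b)"
      using mu0 by (simp add: mult.assoc[symmetric])
    also have "\<dots> = K *v (\<Sum>b\<in>B. (b \<bullet> v) *\<^sub>R b)"
      by (auto simp: vec.sum matrix_vector_mult_scaleR Kb mult.commute intro!: sum.cong)
    also have "\<dots> = K *v v" using onb_expand[OF fB oB nB sB, of v] by simp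
    finally show ?thesis .
  qed
  hence "S ** S = K" by (simp add: matrix_eq)
  moreover have "psd_matrix S" unfolding psd_matrix_def using symS psS by blast
  ultimately show ?thesis by blast
qed

lemma psd_sqrt_unique:
  fixes S T :: "real^'n^'n"
  assumes pS: "psd_matrix S" and pT: "psd_matrix T" and eq: "S ** S = T ** T"
  shows "S = T"
proof -
  have sS: "transpose S = S" and sT: "transpose T = T"
    and nS: "\<forall>x. 0 \<le> x \<bullet> (S *v x)" and nT: "\<forall>x. 0 \<le> x \<bullet> (T *v x)"
    using pS pT unfolding psd_matrix_def by auto
  define D where "D = S - T"
  have sD: "transpose D = D" unfolding D_def using sS sT
    by (simp add: transpose_def vec_eq_iff)
  obtain B where fB: "finite B" and sB: "span B = UNIV" and oB: "pairwise orthogonal B"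
    and eB: "\<forall>b\<in>B. norm b = 1 \<and> (\<exists>\<mu>. D *v b = \<mu> *\<^sub>R b)" using spectral[OF sD] by blast
  have nB: "\<forall>b\<in>B. norm b = 1" using eB by blast
  have Db: "D *v b = 0" if b: "b \<in> B" for b
  proof -
    obtain m where m: "D *v b = m *\<^sub>R b" using eB b by blast
    have Dv: "D *v x = S *v x - T *v x" for x unfolding D_def
      by (simp add: matrix_vector_mult_diff_rdistrib)
    have "S *v (S *v b) = T *v (T *v b)" using eq by (simp add: matrix_vector_mul_assoc)
    hence "S *v (D *v b) + D *v (T *v b) = 0"
      unfolding Dv by (simp add: matrix_vector_mult_diff_distrib)
    hence "b \<bullet> (S *v (D *v b)) + b \<bullet> (D *v (T *v b)) = 0"
      by (metis inner_add_right inner_zero_right)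
    moreover have "b \<bullet> (D *v (T *v b)) = (D *v b) \<bullet> (T *v b)" by (rule sym_dot[OF sD])
    ultimately have "m * (b \<bullet> (S *v b)) + m * (b \<bullet> (T *v b)) = 0"
      unfolding m by (simp add: matrix_vector_mult_scaleR)
    hence "m = 0 \<or> b \<bullet> (S *v b) + b \<bullet> (T *v b) = 0" by (simp add: distrib_left[symmetric])
    thus ?thesis
    proof
      assume "m = 0" thus ?thesis using m by simp
    next
      assume h: "b \<bullet> (S *v b) + b \<bullet> (T *v b) = 0"
      have "b \<bullet> (S *v b) = 0" "b \<bullet> (T *v b) = 0" using h nS nT by (smt (verit))+
      hence "S *v b = 0" "T *v b = 0" using psd_zero pS pT by blast+
      thus ?thesis unfolding Dv by simp
    qed
  qed
  have "D *v v = 0 *v v" for v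
  proof -
    have "D *v v = D *v (\<Sum>b\<in>B. (b \<bullet> v) *\<^sub>R b)" using onb_expand[OF fB oB nB sB, of v] by simp
    also have "\<dots> = 0" by (simp add: vec.sum matrix_vector_mult_scaleR Db)
    finally show ?thesis by simp
  qed
  hence "D = 0" by (simp add: matrix_eq)
  thus ?thesis unfolding D_def by simp
qed

lemma matrix_sqrt_props:
  fixes K :: "real^'n^'n"
  assumes "psd_matrix K"
  shows "psd_matrix (matrix_sqrt K) \<and> matrix_sqrt K ** matrix_sqrt K = K"
proof -
  obtain S where S: "psd_matrix S \<and> S ** S = K" using psd_sqrt_exists[OF assms] by blast
  have "matrix_sqrt K = S" unfolding matrix_sqrt_def
    using S psd_sqrt_unique by (intro the_equality) auto
  thus ?thesis using S by simp
qed

lemma matrix_inv_props: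
  fixes M :: "real^'n^'n"
  assumes "invertible M"
  shows "M ** matrix_inv M = mat 1 \<and> matrix_inv M ** M = mat 1"
  using assms unfolding invertible_def matrix_inv_def by (rule someI_ex)

lemma comm_inv:
  fixes A M :: "real^'n^'n"
  assumes "invertible M" and c: "A ** M = M ** A"
  shows "A ** matrix_inv M = matrix_inv M ** A"
proof -
  let ?R = "matrix_inv M"
  have MR: "M ** ?R = mat 1" and RM: "?R ** M = mat 1" using matrix_inv_props[OF assms(1)] by auto
  have "A ** ?R = (?R ** M) ** A ** ?R" using RM by (simp add: matrix_mul_lid)
  also have "\<dots> = ?R ** (A ** M) ** ?R" using c by (simp add: matrix_mul_assoc)
  also have "\<dots> = ?R ** A ** (M ** ?R)" by (simp add: matrix_mul_assoc)
  also have "\<dots> = ?R ** A" using MR by (simp add: matrix_mul_rid)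
  finally show ?thesis .
qed

lemma sqrt_sandwich:
  fixes K :: "real^'n^'n"
  assumes pK: "psd_matrix K" and inv: "invertible (c *\<^sub>R K + mat 1)"
  shows "matrix_sqrt K ** matrix_inv (c *\<^sub>R K + mat 1) ** matrix_sqrt K
       = K ** matrix_inv (c *\<^sub>R K + mat 1)"
proof -
  let ?S = "matrix_sqrt K" and ?M = "c *\<^sub>R K + mat 1"
  let ?R = "matrix_inv ?M"
  have SS: "?S ** ?S = K" using matrix_sqrt_props[OF pK] by simp
  have SK: "?S ** K = K ** ?S"
  proof -
    have "?S ** K = ?S ** (?S ** ?S)" using SS by simp
    also have "\<dots> = (?S ** ?S) ** ?S" by (rule matrix_mul_assoc)
    finally show ?thesis using SS by simp
  qed
  have comm: "A ** ?M = ?M ** A" if "A ** K = K ** A" for A :: "real^'n^'n"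
  proof -
    have "(A ** ?M) *v v = (?M ** A) *v v" for v
    proof -
      have "(A ** ?M) *v v = c *\<^sub>R (A ** K *v v) + A *v v"
        by (simp add: matrix_vector_mul_assoc[symmetric] matrix_vector_mult_add_rdistrib
            matrix_vector_right_distrib scaleR_matrix_vector_assoc[symmetric] matrix_vector_mult_scaleR)
      also have "\<dots> = c *\<^sub>R (K ** A *v v) + A *v v" using that by simp
      also have "\<dots> = (?M ** A) *v v"
        by (simp add: matrix_vector_mul_assoc[symmetric] matrix_vector_mult_add_rdistrib
            scaleR_matrix_vector_assoc[symmetric])
      finally show ?thesis .
    qed
    thus ?thesis by (simp add: matrix_eq)
  qed
  have SR: "?S ** ?R = ?R ** ?S" by (rule comm_inv[OF inv comm[OF SK]])
  have KR: "K ** ?R = ?R ** K" by (rule comm_inv[OF inv comm]) simp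
  have "?S ** ?R ** ?S = ?R ** ?S ** ?S" using SR by simp
  also have "\<dots> = ?R ** K" using SS by (simp add: matrix_mul_assoc[symmetric])
  finally show ?thesis using KR by simp
qed



lemma rkhs_main:
  fixes ev :: "'h::{real_inner,complete_space} \<Rightarrow> 'x \<Rightarrow> real" and K :: "'x \<Rightarrow> 'x \<Rightarrow> real"
    and pts :: "'n::finite \<Rightarrow> 'x" and c :: "'n \<Rightarrow> real" and lam gam :: real
  assumes rk: "rkhs ev K" and lp: "lam > 0" and gp: "gam > 0"
  defines "n \<equiv> real CARD('n)"
  defines "Kn \<equiv> (\<chi> i j. K (pts i) (pts j)) :: real^'n^'n"
  defines "\<psi> \<equiv> (\<chi> i. (1/n) * c i) :: real^'n"
  defines "R \<equiv> matrix_inv ((lam / gam * (1/n)) *\<^sub>R Kn + mat 1)"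
  shows "is_max_value (\<lambda>f. (1/n) * (\<Sum>i\<in>UNIV. c i * ev f (pts i))
              - lam * ((1/n) * (\<Sum>i\<in>UNIV. (ev f (pts i))\<^sup>2)) - gam * (norm f)\<^sup>2)
           (1 / (4 * gam) * (\<psi> \<bullet> ((Kn ** R) *v \<psi>)))
     \<and> 1 / (4 * gam) * (\<psi> \<bullet> ((Kn ** R) *v \<psi>))
         = 1 / (4 * gam) * (\<psi> \<bullet> ((matrix_sqrt Kn ** R ** matrix_sqrt Kn) *v \<psi>))"
proof -
  have "\<forall>y. \<exists>k. ev k = (\<lambda>x. K x y) \<and> (\<forall>f. ev f y = inner f k)" using rk unfolding rkhs_def by blast
  from choice[OF this] obtain k where k: "\<And>y. ev (k y) = (\<lambda>x. K x y)" "\<And>y f. ev f y = inner f (k y)"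
    by blast
  define kk where "kk i = k (pts i)" for i
  have evk: "ev f (pts i) = inner f (kk i)" for f i unfolding kk_def by (rule k(2))
  have Knij: "Kn $ i $ j = inner (kk j) (kk i)" for i j
  proof -
    have "Kn $ i $ j = ev (kk j) (pts i)" unfolding Kn_def kk_def k(1) by simp
    thus ?thesis by (simp add: evk)
  qed
  define G where "G v = (\<Sum>j\<in>UNIV. v$j *\<^sub>R kk j)" for v :: "real^'n"
  have KnG: "(Kn *v v) $ i = inner (G v) (kk i)" for v i
    unfolding matrix_vector_mult_def G_def Knij
    by (simp add: inner_sum_left mult.commute)
  have npos: "n > 0" unfolding n_def by simp
  have psdK: "psd_matrix Kn"
  proof -
    have "transpose Kn = Kn" by (simp add: vec_eq_iff transpose_def Knij inner_commute)
    moreover have "0 \<le> v \<bullet> (Kn *v v)" for v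
    proof -
      have "v \<bullet> (Kn *v v) = (\<Sum>i\<in>UNIV. v$i * inner (G v) (kk i))"
        by (simp add: inner_vec_def KnG)
      also have "\<dots> = inner (G v) (G v)"
        unfolding G_def[of v] by (simp add: inner_sum_right mult.commute)
      finally show ?thesis by simp
    qed
    ultimately show ?thesis unfolding psd_matrix_def by blast
  qed
  define c0 where "c0 = lam / gam * (1/n)"
  have c0p: "c0 > 0" unfolding c0_def using lp gp npos by simp
  define M where "M = c0 *\<^sub>R Kn + mat 1"
  have Mv: "M *v v = c0 *\<^sub>R (Kn *v v) + v" for v
    unfolding M_def by (simp add: matrix_vector_mult_add_rdistrib scaleR_matrix_vector_assoc)
  have invM: "invertible M"
  proof -
    have z: "z = 0" if "M *v z = 0" for z
    proof -
      have "0 = z \<bullet> (M *v z)" using that by simp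
      also have "\<dots> = c0 * (z \<bullet> (Kn *v z)) + z \<bullet> z" by (simp add: Mv inner_add_right)
      finally have "z \<bullet> z \<le> 0" using psdK c0p unfolding psd_matrix_def
        by (smt (verit) mult_nonneg_nonneg)
      thus ?thesis using inner_ge_zero[of z] inner_eq_zero_iff[of z] by linarith
    qed
    have "inj ((*v) M)"
    proof (rule injI)
      fix x y assume "M *v x = M *v y"
      hence "M *v (x - y) = 0" by (simp add: matrix_vector_mult_diff_distrib)
      thus "x = y" using z[of "x - y"] by simp
    qed
    thus ?thesis using invertible_left_inverse matrix_left_invertible_injective by blast
  qed
  have RM: "R = matrix_inv M" unfolding R_def M_def c0_def ..
  have MR: "M ** R = mat 1" using matrix_inv_props[OF invM] RM by simp
  define \<alpha> where "\<alpha> = (1 / (2 * gam)) *\<^sub>R (R *v \<psi>)"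
  have Ma: "M *v \<alpha> = (1 / (2 * gam)) *\<^sub>R \<psi>"
    unfolding \<alpha>_def by (simp add: matrix_vector_mult_scaleR matrix_vector_mul_assoc MR)
  define a where "a = Kn *v \<alpha>"
  define g where "g = G \<alpha>"
  have ga: "inner g (kk i) = a $ i" for i unfolding a_def g_def KnG ..
  have psi_i: "(1/n) * c i = 2 * (lam / n) * a$i + 2 * gam * \<alpha>$i" for i
  proof -
    have "(M *v \<alpha>) $ i = (1 / (2 * gam)) * \<psi>$i" using Ma by simp
    hence "c0 * a$i + \<alpha>$i = (1 / (2 * gam)) * ((1/n) * c i)"
      unfolding Mv a_def \<psi>_def by simp
    hence "gam * n * (2 * lam * a$i + 2 * gam * n * \<alpha>$i) = gam * n * c i"
      unfolding c0_def using gp npos by (simp add: field_simps)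
    hence "2 * lam * a$i + 2 * gam * n * \<alpha>$i = c i" using gp npos by simp
    thus ?thesis using npos by (simp add: field_simps)
  qed
  define F where "F f = (1/n) * (\<Sum>i\<in>UNIV. c i * ev f (pts i))
              - lam * ((1/n) * (\<Sum>i\<in>UNIV. (ev f (pts i))\<^sup>2)) - gam * (norm f)\<^sup>2" for f
  define T where "T u i = (1/n) * c i * u - lam / n * u\<^sup>2" for u i
  have Fsum: "F f = (\<Sum>i\<in>UNIV. T (inner f (kk i)) i) - gam * (norm f)\<^sup>2" for f
    unfolding F_def T_def evk by (simp add: sum_subtractf sum_distrib_left mult.assoc)
  have ginner: "inner g d = (\<Sum>i\<in>UNIV. \<alpha>$i * inner d (kk i))" for d
  proof -
    have "inner g d = (\<Sum>i\<in>UNIV. inner (\<alpha>$i *\<^sub>R kk i) d)" by (simp add: g_def G_def inner_sum_left)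
    also have "\<dots> = (\<Sum>i\<in>UNIV. \<alpha>$i * inner d (kk i))" by (simp add: inner_commute)
    finally show ?thesis .
  qed
  have upper: "F f \<le> F g" for f
  proof -
    define d where "d = f - g"
    have fd: "f = g + d" unfolding d_def by simp
    have Ti: "T (inner f (kk i)) i = T (inner g (kk i)) i - lam / n * (inner d (kk i))\<^sup>2
               + 2 * gam * (\<alpha>$i * inner d (kk i))" for i
    proof -
      have "T (inner f (kk i)) i = T (a$i + inner d (kk i)) i" unfolding fd inner_add_left ga ..
      also have "\<dots> = T (a$i) i - lam / n * (inner d (kk i))\<^sup>2
               + ((1/n) * c i) * inner d (kk i) - 2 * (lam / n) * a$i * inner d (kk i)"
        unfolding T_def by (simp add: power2_eq_square algebra_simps)
      also have "\<dots> = T (a$i) i - lam / n * (inner d (kk i))\<^sup>2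
               + 2 * gam * (\<alpha>$i * inner d (kk i))"
        unfolding psi_i by (simp add: algebra_simps)
      finally show ?thesis unfolding ga .
    qed
    have nf: "(norm f)\<^sup>2 = (norm g)\<^sup>2 + 2 * (\<Sum>i\<in>UNIV. \<alpha>$i * inner d (kk i)) + (norm d)\<^sup>2"
      unfolding fd power2_norm_eq_inner by (simp add: inner_add_left inner_add_right ginner inner_commute[of d g])
    have "F f = F g - ((\<Sum>i\<in>UNIV. lam / n * (inner d (kk i))\<^sup>2) + gam * (norm d)\<^sup>2)"
    proof -
      have s2: "(\<Sum>i\<in>UNIV. \<alpha>$i * (2 * inner d (kk i))) = 2 * (\<Sum>i\<in>UNIV. \<alpha>$i * inner d (kk i))"
        by (simp add: sum_distrib_left mult_ac)
      show ?thesis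
        unfolding Fsum Ti nf
        by (simp add: sum.distrib sum_subtractf sum_distrib_left[symmetric] algebra_simps s2)
    qed
    moreover have "0 \<le> (\<Sum>i\<in>UNIV. lam / n * (inner d (kk i))\<^sup>2) + gam * (norm d)\<^sup>2"
      using lp gp npos by (intro add_nonneg_nonneg sum_nonneg mult_nonneg_nonneg) auto
    ultimately show ?thesis by simp
  qed
  have valF: "F g = 1 / (4 * gam) * (\<psi> \<bullet> ((Kn ** R) *v \<psi>))"
  proof -
    have Rpsi: "R *v \<psi> = (2 * gam) *\<^sub>R \<alpha>" unfolding \<alpha>_def using gp by simp
    have "(Kn ** R) *v \<psi> = (2 * gam) *\<^sub>R a"
      unfolding matrix_vector_mul_assoc[symmetric] Rpsi a_def by (simp add: matrix_vector_mult_scaleR)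
    hence "1 / (4 * gam) * (\<psi> \<bullet> ((Kn ** R) *v \<psi>)) = 1/2 * (\<Sum>i\<in>UNIV. ((1/n) * c i) * a$i)"
      using gp by (simp add: inner_vec_def \<psi>_def sum_distrib_left)
    also have "\<dots> = (\<Sum>i\<in>UNIV. lam / n * (a$i)\<^sup>2 + gam * (\<alpha>$i * a$i))"
      unfolding psi_i by (simp add: sum_distrib_left power2_eq_square algebra_simps)
    also have "\<dots> = F g"
    proof -
      have "(norm g)\<^sup>2 = (\<Sum>i\<in>UNIV. \<alpha>$i * a$i)"
        unfolding power2_norm_eq_inner ginner[of g] by (simp add: ga)
      moreover have "T (a$i) i = lam / n * (a$i)\<^sup>2 + 2 * gam * (\<alpha>$i * a$i)" for i
        unfolding T_def psi_i by (simp add: power2_eq_square algebra_simps)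
      ultimately show ?thesis unfolding Fsum ga
        by (simp add: sum.distrib sum_distrib_left algebra_simps)
    qed
    finally show ?thesis ..
  qed
  have "is_max_value F (1 / (4 * gam) * (\<psi> \<bullet> ((Kn ** R) *v \<psi>)))"
    unfolding is_max_value_def using upper valF by metis
  moreover have "matrix_sqrt Kn ** R ** matrix_sqrt Kn = Kn ** R"
    unfolding RM M_def by (rule sqrt_sandwich[OF psdK invM[unfolded M_def]])
  ultimately show ?thesis unfolding F_def by simp
qed

theorem mainTheorem8:
  fixes evM :: "'hm::{real_inner,complete_space} \<Rightarrow> ('a \<times> 'w \<times> 'x) \<Rightarrow> real"
    and KM :: "('a \<times> 'w \<times> 'x) \<Rightarrow> ('a \<times> 'w \<times> 'x) \<Rightarrow> real"
    and evG :: "'hg::{real_inner,complete_space} \<Rightarrow> ('a \<times> 'z \<times> 'x) \<Rightarrow> real"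
    and KG :: "('a \<times> 'z \<times> 'x) \<Rightarrow> ('a \<times> 'z \<times> 'x) \<Rightarrow> real"
    and lam_m gam_m lam_g gam_g :: real
    and A :: "'n::finite \<Rightarrow> 'a" and Z :: "'n \<Rightarrow> 'z" and W :: "'n \<Rightarrow> 'w"
    and X :: "'n \<Rightarrow> 'x" and Y :: "'n \<Rightarrow> real"
    and p :: "'a \<Rightarrow> 'w \<Rightarrow> 'x \<Rightarrow> real"
    and q :: "'a \<Rightarrow> 'z \<Rightarrow> 'x \<Rightarrow> real"
    and h :: "'a \<Rightarrow> 'w \<Rightarrow> 'x \<Rightarrow> real"
  assumes "rkhs evM KM" and "rkhs evG KG"
    and "lam_m > 0" and "gam_m > 0" and "lam_g > 0" and "gam_g > 0"
  shows
   "let n = real CARD('n);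
        \<Phi>q = (\<lambda>f. (1/n) * (\<Sum>i\<in>UNIV. (q (A i) (Z i) (X i) - 1 / p (A i) (W i) (X i))
                                 * evM f (A i, W i, X i)));
        \<Phi>h = (\<lambda>f. (1/n) * (\<Sum>i\<in>UNIV. (Y i - h (A i) (W i) (X i)) * evG f (A i, Z i, X i)));
        nM = (\<lambda>f. (1/n) * (\<Sum>i\<in>UNIV. (evM f (A i, W i, X i))\<^sup>2));
        nG = (\<lambda>f. (1/n) * (\<Sum>i\<in>UNIV. (evG f (A i, Z i, X i))\<^sup>2));
        KMn = (\<chi> i j. KM (A i, W i, X i) (A j, W j, X j)) :: real^'n^'n;
        KGn = (\<chi> i j. KG (A i, Z i, X i) (A j, Z j, X j)) :: real^'n^'n;
        \<psi>q = (\<chi> i. (1/n) * (q (A i) (Z i) (X i) - 1 / p (A i) (W i) (X i))) :: real^'n;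
        \<psi>h = (\<chi> i. (1/n) * (Y i - h (A i) (W i) (X i))) :: real^'n;
        RM = matrix_inv ((lam_m / gam_m * (1/n)) *\<^sub>R KMn + mat 1);
        RG = matrix_inv ((lam_g / gam_g * (1/n)) *\<^sub>R KGn + mat 1)
    in is_max_value (\<lambda>f. \<Phi>q f - lam_m * nM f - gam_m * (norm f)\<^sup>2)
          (1 / (4 * gam_m) * (\<psi>q \<bullet> ((KMn ** RM) *v \<psi>q)))
     \<and> 1 / (4 * gam_m) * (\<psi>q \<bullet> ((KMn ** RM) *v \<psi>q))
         = 1 / (4 * gam_m) * (\<psi>q \<bullet> ((matrix_sqrt KMn ** RM ** matrix_sqrt KMn) *v \<psi>q))
     \<and> is_max_value (\<lambda>f. \<Phi>h f - lam_g * nG f - gam_g * (norm f)\<^sup>2)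
          (1 / (4 * gam_g) * (\<psi>h \<bullet> ((KGn ** RG) *v \<psi>h)))
     \<and> 1 / (4 * gam_g) * (\<psi>h \<bullet> ((KGn ** RG) *v \<psi>h))
         = 1 / (4 * gam_g) * (\<psi>h \<bullet> ((matrix_sqrt KGn ** RG ** matrix_sqrt KGn) *v \<psi>h))"
  proof -
  note M = rkhs_main[OF assms(1) assms(3) assms(4), where pts = "\<lambda>i. (A i, W i, X i)"
             and c = "\<lambda>i. q (A i) (Z i) (X i) - 1 / p (A i) (W i) (X i)"]
  note G = rkhs_main[OF assms(2) assms(5) assms(6), where pts = "\<lambda>i. (A i, Z i, X i)"
             and c = "\<lambda>i. Y i - h (A i) (W i) (X i)"]
  show ?thesis unfolding Let_def using M G by simp
qed

end
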